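(* Let $k\ge1$ and let $g$ be a variable of type level $k+2$. If $\Gamma\vdash t$ is $g$-regular and ${\mathrm{PCF}}^\Omega_k$-denotable, then any inductive generation of the denotability of $\Gamma\vdash t$ via the following six rules consists entirely of $g$-regular procedures-in-environment: 1. from denotable $\Gamma\vdash q_i$ ($i<r$) and $x\in\Gamma$, infer $\Gamma\vdash\lambda.\mathtt{case}\ x\,q_0\cdots q_{r-1}\ \mathtt{of}\ (j\Rightarrow j)$; 2. from $\Gamma,x\vdash p$ infer $\Gamma\vdash\lambda x.p$; 3. $\Gamma\vdash\lambda.n$; 4. from $\Gamma\vdash p$ and $f:\mathbb{N}\rightharpoonup\mathbb{N}$ infer $\Gamma\vdash p[i\mapsto f(i)]$; 5. from $\Gamma\vdash p$, $\Gamma\vdash\lambda.d$, $\Gamma\vdash\lambda.e$ infer $\Gamma\vdash p[0\mapsto d,\ i+1\mapsto e]$; 6. from $\Gamma\vdash\lambda z^\sigma x_0^{\sigma_0}\cdots x_{r-1}^{\sigma_{r-1}}.e$ with $\sigma=\sigma_0,\ldots,\sigma_{r-1}\rightarrow\mathbb{N}$ of level $\le k$ and $\Gamma\vdash q_i:\sigma_i$, infer $\Gamma\vdash\lambda.\langle\!\langle\Pi_{\Gamma,Z}(e,\xi)\rangle\!\rangle$ where $Z=z,\vec x$ is disjoint from $\Gamma$, $\xi(z)=\lambda\vec x.e$, $\xi(x_i)=q_i$.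
   Context: Levels: ${\mathrm{lv}}(\mathbb{N})=0$, ${\mathrm{lv}}(\sigma\rightarrow\tau)=\max({\mathrm{lv}}\,\sigma+1,{\mathrm{lv}}\,\tau)$. ${\mathrm{PCF}}^\Omega_k$: simply typed $\lambda$-calculus over $\mathbb{N}$ with $\underline n,\mathit{suc},\mathit{pre},\mathit{ifzero}$, oracle constants $C_f$ ($f:\mathbb{N}\rightharpoonup\mathbb{N}$) and $Y_\sigma$ only for ${\mathrm{lv}}(\sigma)\le k$. NSPs: coinductively generated well-typed trees $p::=\lambda\vec x.e$, $e::=\bot\mid n\mid\mathtt{case}\ a\ \mathtt{of}\ (i\Rightarrow e_i\mid i\in\mathbb{N})$, $a::=x\,q_0\cdots q_{r-1}$, modulo $\alpha$; $\langle\!\langle-\rangle\!\rangle$ is evaluation of meta-terms (limit of reduction by $\beta$, $\mathtt{case}\ \bot\rightsquigarrow\bot$, $\mathtt{case}\ n\ \mathtt{of}(i\Rightarrow E_i)\rightsquigarrow E_n$, case-of-case commutation). A procedure-in-environment $\Gamma\vdash p$ is ${\mathrm{PCF}}^\Omega_k$-denotable if $p=[\![M]\!]_\Gamma$ for a ${\mathrm{PCF}}^\Omega_k$ term $\Gamma\vdash M$ under the standard NSP interpretation ($[\![x]\!]=x^\eta$ with $x^\eta=\lambda\vec z.\mathtt{case}\ x\vec z^{\,\eta}\ \mathtt{of}(i\Rightarrow i)$, $[\![\lambda x.M]\!]=\lambda x.[\![M]\!]$, $[\![MN]\!]=[\![M]\!]\cdot[\![N]\!]$ with $(\lambda x_0\cdots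 x_r.e)\cdot q=\lambda x_1\cdots x_r.\langle\!\langle e[x_0\mapsto q]\rangle\!\rangle$, constants by their standard procedures). $t[i\mapsto e_i]$ replaces each rightward numeral leaf $i$ of $t$ (leaves reached only through $\lambda$-bodies and case branches) by $e_i$. Plugging $\Pi_{\Gamma,Z}(e,\xi)=\bigsqcup_m(\Pi^m)^\circ$ where $\Pi^0=e$, $\Pi^{m+1}=\Pi^m[z\mapsto\xi(z)\ \forall z\in Z]$ and $T^\circ$ replaces each ground subterm $z\vec Q$ ($z\in Z$) by $\bot$. $g$-regular: an environment is $g$-regular if it contains $g$ and otherwise only variables of level $\le k$; a term is $g$-regular if all its free and bound variables are of level $\le k$ except possibly free occurrences of $g$; $\Gamma\vdash t$ is $g$-regular if both are. *)

theory Defs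
  imports Main
begin

datatype ty = N | Arr ty ty

fun lv :: "ty \<Rightarrow> nat" where
  "lv N = 0"
| "lv (Arr s t) = max (lv s + 1) (lv t)"

fun args :: "ty \<Rightarrow> ty list" where
  "args N = []"
| "args (Arr s t) = s # args t"

type_synonym var = "nat \<times> ty"

section \<open>NSPs and meta-terms (locally nameless, multi-binder de Bruijn)\<close>

datatype vr = BV nat nat | FV var

codatatype tm =
    Lam (ltys: "ty list") (lbody: tm)
  | Bot
  | Num (nval: nat)
  | VCase (vvar: vr) (vargs: "tm list") (vbr: "nat \<Rightarrow> tm")
  | ACase (afun: tm) (aargs: "tm list") (abr: "nat \<Rightarrow> tm")
  | MCase (msubj: tm) (mbr: "nat \<Rightarrow> tm")

primcorec vmap :: "(nat \<Rightarrow> vr \<Rightarrow> vr + tm) \<Rightarrow> nat \<Rightarrow> tm \<Rightarrow> tm" where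
  "vmap \<rho> d t = (case t of
      Lam tys b \<Rightarrow> Lam tys (vmap \<rho> (Suc d) b)
    | Bot \<Rightarrow> Bot
    | Num n \<Rightarrow> Num n
    | VCase v qs bs \<Rightarrow> (case \<rho> d v of
          Inl v' \<Rightarrow> VCase v' (map (vmap \<rho> d) qs) (vmap \<rho> d \<circ> bs)
        | Inr q \<Rightarrow> ACase q (map (vmap \<rho> d) qs) (vmap \<rho> d \<circ> bs))
    | ACase p qs bs \<Rightarrow> ACase (vmap \<rho> d p) (map (vmap \<rho> d) qs) (vmap \<rho> d \<circ> bs)
    | MCase s bs \<Rightarrow> MCase (vmap \<rho> d s) (vmap \<rho> d \<circ> bs))"

definition ptype :: "tm \<Rightarrow> ty" where
  "ptype t = (case t of Lam tys _ \<Rightarrow> foldr Arr tys N | _ \<Rightarrow> N)"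

fun shiftv :: "nat \<Rightarrow> nat \<Rightarrow> vr \<Rightarrow> vr" where
  "shiftv c n (BV i j) = (if c \<le> i then BV (i + n) j else BV i j)"
| "shiftv c n (FV x) = FV x"

definition shift :: "nat \<Rightarrow> tm \<Rightarrow> tm" where
  "shift n t = vmap (\<lambda>d v. Inl (shiftv d n v)) 0 t"

text \<open>instantiation of the body b of \<lambda>xs.b by the list qs (\<beta>-reduction)\<close>
definition inst :: "tm \<Rightarrow> tm list \<Rightarrow> tm" where
  "inst b qs = vmap (\<lambda>d v. case v of
       BV i j \<Rightarrow> (if i = d then Inr (shift d (qs ! j))
                  else if d < i then Inl (BV (i - 1) j) else Inl (BV i j))
     | FV x \<Rightarrow> Inl (FV x)) 0 b"

text \<open>one step of head reduction on meta-expressions: \<beta>, case-of-\<bottom>, case-of-n, case-of-case\<close>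
definition hstep :: "tm \<Rightarrow> tm option" where
  "hstep t = (case t of
      ACase p qs bs \<Rightarrow> (case p of
          Lam tys b \<Rightarrow> (if length tys = length qs then Some (MCase (inst b qs) bs) else None)
        | _ \<Rightarrow> None)
    | MCase s bs \<Rightarrow> (case s of
          Bot \<Rightarrow> Some Bot
        | Num n \<Rightarrow> Some (bs n)
        | VCase v qs cs \<Rightarrow> Some (VCase v qs (\<lambda>i. MCase (cs i) bs))
        | ACase p qs cs \<Rightarrow> Some (ACase p qs (\<lambda>i. MCase (cs i) bs))
        | MCase s' cs \<Rightarrow> Some (MCase s' (\<lambda>i. MCase (cs i) bs))
        | Lam _ _ \<Rightarrow> None)
    | _ \<Rightarrow> None)"

fun hiter :: "nat \<Rightarrow> tm \<Rightarrow> tm" where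
  "hiter 0 t = t"
| "hiter (Suc n) t = (case hstep (hiter n t) of None \<Rightarrow> hiter n t | Some t' \<Rightarrow> t')"

definition is_hnf :: "tm \<Rightarrow> bool" where
  "is_hnf t = (case t of Bot \<Rightarrow> True | Num _ \<Rightarrow> True | VCase _ _ _ \<Rightarrow> True | _ \<Rightarrow> False)"

text \<open>head normal form; \<bottom> if head reduction does not terminate (or gets stuck)\<close>
definition hnorm :: "tm \<Rightarrow> tm" where
  "hnorm t = (if \<exists>n. is_hnf (hiter n t) then hiter (LEAST n. is_hnf (hiter n t)) t else Bot)"

definition pre_eval :: "tm \<Rightarrow> tm" where
  "pre_eval t = (case t of Lam _ _ \<Rightarrow> t | _ \<Rightarrow> hnorm t)"

text \<open>\<langle>\<langle>-\<rangle>\<rangle>: evaluation of a meta-term to an NSP (Boehm-tree style limit of reduction)\<close>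
primcorec eval :: "tm \<Rightarrow> tm" where
  "eval t = (case pre_eval t of
      Lam tys b \<Rightarrow> Lam tys (eval b)
    | Num n \<Rightarrow> Num n
    | VCase v qs bs \<Rightarrow> VCase v (map eval qs) (eval \<circ> bs)
    | _ \<Rightarrow> Bot)"

definition lubstart :: "(nat \<Rightarrow> tm) \<Rightarrow> nat" where
  "lubstart c = (LEAST m. c m \<noteq> Bot)"

definition lubhd :: "(nat \<Rightarrow> tm) \<Rightarrow> tm" where
  "lubhd c = (if \<exists>m. c m \<noteq> Bot then c (lubstart c) else Bot)"

definition ltail :: "(nat \<Rightarrow> tm) \<Rightarrow> nat \<Rightarrow> tm" where
  "ltail c m = c (lubstart c + m)"

text \<open>the supremum of an increasing chain (w.r.t. the order generated by \<bottom> \<le> t)\<close>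
primcorec lub :: "(nat \<Rightarrow> tm) \<Rightarrow> tm" where
  "lub c = (case lubhd c of
      Lam tys b \<Rightarrow> Lam tys (lub (\<lambda>m. lbody (ltail c m)))
    | Bot \<Rightarrow> Bot
    | Num n \<Rightarrow> Num n
    | VCase v qs bs \<Rightarrow> VCase v (map (\<lambda>j. lub (\<lambda>m. vargs (ltail c m) ! j)) [0..<length qs])
                         (\<lambda>i. lub (\<lambda>m. vbr (ltail c m) i))
    | ACase p qs bs \<Rightarrow> ACase (lub (\<lambda>m. afun (ltail c m)))
                         (map (\<lambda>j. lub (\<lambda>m. aargs (ltail c m) ! j)) [0..<length qs])
                         (\<lambda>i. lub (\<lambda>m. abr (ltail c m) i))
    | MCase s bs \<Rightarrow> MCase (lub (\<lambda>m. msubj (ltail c m))) (\<lambda>i. lub (\<lambda>m. mbr (ltail c m) i)))"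


definition rr_pre :: "(nat \<Rightarrow> tm) \<Rightarrow> bool \<Rightarrow> tm \<Rightarrow> tm" where
  "rr_pre f b t = (case t of Num n \<Rightarrow> (if b then f n else t) | _ \<Rightarrow> t)"

definition rr_mode :: "bool \<Rightarrow> tm \<Rightarrow> bool" where
  "rr_mode b t = (b \<and> \<not> is_Num t)"

text \<open>rr f True t = t[i \<mapsto> f i]: replace every rightward numeral leaf i (reached only through
  \<lambda>-bodies and case branches) by f i; in mode False the term is copied unchanged\<close>
primcorec rr :: "(nat \<Rightarrow> tm) \<Rightarrow> bool \<Rightarrow> tm \<Rightarrow> tm" where
  "rr f b t = (case rr_pre f b t of
      Lam tys e \<Rightarrow> Lam tys (rr f (rr_mode b t) e)
    | Bot \<Rightarrow> Bot
    | Num n \<Rightarrow> Num n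
    | VCase v qs bs \<Rightarrow> VCase v (map (rr f False) qs) (rr f (rr_mode b t) \<circ> bs)
    | ACase p qs bs \<Rightarrow> ACase (rr f False p) (map (rr f False) qs) (rr f (rr_mode b t) \<circ> bs)
    | MCase s bs \<Rightarrow> MCase (rr f False s) (rr f (rr_mode b t) \<circ> bs))"

definition replace_leaves :: "tm \<Rightarrow> (nat \<Rightarrow> tm) \<Rightarrow> tm" where
  "replace_leaves t f = rr f True t"

text \<open>T\<degree>: replace every ground subterm z Q (z a variable of the block Z, which is the outermost
  bound level, i.e. level d at depth d) by \<bottom>\<close>
primcorec circ :: "nat \<Rightarrow> tm \<Rightarrow> tm" where
  "circ d t = (case t of
      Lam tys b \<Rightarrow> Lam tys (circ (Suc d) b)
    | Bot \<Rightarrow> Bot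
    | Num n \<Rightarrow> Num n
    | VCase v qs bs \<Rightarrow> (if v \<in> {BV d j | j. True} then Bot
                         else VCase v (map (circ d) qs) (circ d \<circ> bs))
    | ACase p qs bs \<Rightarrow> ACase (circ d p) (map (circ d) qs) (circ d \<circ> bs)
    | MCase s bs \<Rightarrow> MCase (circ d s) (circ d \<circ> bs))"

text \<open>Given the body e of \<lambda>z x0..x(r-1).e (z = BV 0 0, x_i = BV 0 (i+1) at top level of e),
  the procedure \<xi>(z) = \<lambda>x.e, regarded in the context whose innermost block is Z\<close>
definition xi_z :: "ty list \<Rightarrow> tm \<Rightarrow> tm" where
  "xi_z \<sigma>s e = Lam \<sigma>s (vmap (\<lambda>d v. case v of
       BV i j \<Rightarrow> (if i = d then (if j = 0 then Inl (BV (Suc d) 0) else Inl (BV d (j - 1)))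
                  else if d < i then Inl (BV (Suc i) j) else Inl (BV i j))
     | FV x \<Rightarrow> Inl (FV x)) 0 e)"

text \<open>one plugging step: T[z \<mapsto> \<xi>(z), x_i \<mapsto> q_i]\<close>
definition plug_step :: "ty list \<Rightarrow> tm \<Rightarrow> tm list \<Rightarrow> tm \<Rightarrow> tm" where
  "plug_step \<sigma>s e qs t = vmap (\<lambda>d v. case v of
       BV i j \<Rightarrow> (if i = d then (if j = 0 then Inr (shift d (xi_z \<sigma>s e)) else Inr (shift d (qs ! (j - 1))))
                  else Inl (BV i j))
     | FV x \<Rightarrow> Inl (FV x)) 0 t"

definition Plug :: "ty list \<Rightarrow> tm \<Rightarrow> tm list \<Rightarrow> tm" where
  "Plug \<sigma>s e qs = lub (\<lambda>m. circ 0 ((plug_step \<sigma>s e qs ^^ m) e))"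

fun incv :: "vr \<Rightarrow> vr" where
  "incv (BV i j) = BV (Suc i) j"
| "incv (FV x) = FV x"

text \<open>\<eta>-expansion x^\<eta> = \<lambda>z. case x z^\<eta> of (i \<Rightarrow> i) of a variable of type \<tau>;
  etas \<tau> off = the \<eta>-expansions of the variables BV 0 off, BV 0 (off+1), ... of types args \<tau>\<close>
fun eta :: "ty \<Rightarrow> vr \<Rightarrow> tm" and etas :: "ty \<Rightarrow> nat \<Rightarrow> tm list" where
  "eta \<tau> v = Lam (args \<tau>) (VCase (incv v) (etas \<tau> 0) Num)"
| "etas N off = []"
| "etas (Arr a b) off = eta a (BV 0 off) # etas b (Suc off)"

text \<open>\<lambda>x.p for a procedure p = \<lambda>ys.e: the procedure \<lambda>x ys.e\<close>
definition close :: "var \<Rightarrow> tm \<Rightarrow> tm" where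
  "close x t = (case t of
      Lam tys e \<Rightarrow> Lam (snd x # tys) (vmap (\<lambda>d v. case v of
          FV y \<Rightarrow> (if y = x then Inl (BV d 0) else Inl (FV y))
        | BV i j \<Rightarrow> (if i = d then Inl (BV d (Suc j)) else Inl (BV i j))) 0 e)
    | _ \<Rightarrow> t)"

text \<open>(\<lambda>x0 ... xr.e) \<cdot> q = \<lambda>x1 ... xr. \<langle>\<langle>e[x0 \<mapsto> q]\<rangle>\<rangle>\<close>
definition papp :: "tm \<Rightarrow> tm \<Rightarrow> tm" where
  "papp p q = (case p of
      Lam tys e \<Rightarrow> (case tys of
          [] \<Rightarrow> Lam [] Bot
        | \<sigma> # tys' \<Rightarrow> Lam tys' (eval (vmap (\<lambda>d v. case v of
              BV i j \<Rightarrow> (if i = d then (if j = 0 then Inr (shift (Suc d) q) else Inl (BV d (j - 1)))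
                         else Inl (BV i j))
            | FV y \<Rightarrow> Inl (FV y)) 0 e)))
    | _ \<Rightarrow> Lam [] Bot)"

text \<open>finite approximants of the standard procedure for Y_\<sigma>\<close>
fun YA :: "ty \<Rightarrow> nat \<Rightarrow> nat \<Rightarrow> tm" where
  "YA \<sigma> 0 n = Lam (args \<sigma>) Bot"
| "YA \<sigma> (Suc m) n = Lam (args \<sigma>) (VCase (BV n 0) (YA \<sigma> m (Suc n) # etas \<sigma> 0) Num)"

text \<open>Y_\<sigma> = \<lambda>f x. case f \<Phi> x^\<eta> of (i \<Rightarrow> i) with \<Phi> = \<lambda>y. case f \<Phi> y^\<eta> of (i \<Rightarrow> i)\<close>
definition Yproc :: "ty \<Rightarrow> tm" where
  "Yproc \<sigma> = lub (\<lambda>m. Lam (Arr \<sigma> \<sigma> # args \<sigma>) (VCase (BV 0 0) (YA \<sigma> m 1 # etas \<sigma> 1) Num))"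

datatype pcf =
    PV var
  | PLam var pcf
  | PAp pcf pcf
  | PNum nat
  | PSuc
  | PPre
  | PIfz
  | POr "nat \<Rightarrow> nat option"
  | PY ty

inductive pcf_ty :: "nat \<Rightarrow> var set \<Rightarrow> pcf \<Rightarrow> ty \<Rightarrow> bool" for k where
  "x \<in> \<Gamma> \<Longrightarrow> pcf_ty k \<Gamma> (PV x) (snd x)"
| "pcf_ty k (insert x \<Gamma>) M \<tau> \<Longrightarrow> pcf_ty k \<Gamma> (PLam x M) (Arr (snd x) \<tau>)"
| "pcf_ty k \<Gamma> M (Arr \<sigma> \<tau>) \<Longrightarrow> pcf_ty k \<Gamma> N' \<sigma> \<Longrightarrow> pcf_ty k \<Gamma> (PAp M N') \<tau>"
| "pcf_ty k \<Gamma> (PNum n) N"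
| "pcf_ty k \<Gamma> PSuc (Arr N N)"
| "pcf_ty k \<Gamma> PPre (Arr N N)"
| "pcf_ty k \<Gamma> PIfz (Arr N (Arr N (Arr N N)))"
| "pcf_ty k \<Gamma> (POr f) (Arr N N)"
| "lv \<sigma> \<le> k \<Longrightarrow> pcf_ty k \<Gamma> (PY \<sigma>) (Arr (Arr \<sigma> \<sigma>) \<sigma>)"

fun interp :: "pcf \<Rightarrow> tm" where
  "interp (PV x) = eta (snd x) (FV x)"
| "interp (PLam x M) = close x (interp M)"
| "interp (PAp M N') = papp (interp M) (interp N')"
| "interp (PNum n) = Lam [] (Num n)"
| "interp PSuc = Lam [N] (VCase (BV 0 0) [] (\<lambda>i. Num (Suc i)))"
| "interp PPre = Lam [N] (VCase (BV 0 0) [] (\<lambda>i. Num (i - 1)))"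
| "interp PIfz = Lam [N, N, N] (VCase (BV 0 0) []
      (\<lambda>i. if i = 0 then VCase (BV 0 1) [] Num else VCase (BV 0 2) [] Num))"
| "interp (POr f) = Lam [N] (VCase (BV 0 0) [] (\<lambda>i. case f i of None \<Rightarrow> Bot | Some n \<Rightarrow> Num n))"
| "interp (PY \<sigma>) = Yproc \<sigma>"

definition denotable :: "nat \<Rightarrow> var set \<Rightarrow> tm \<Rightarrow> bool" where
  "denotable k \<Gamma> p \<longleftrightarrow> (\<exists>M \<tau>. pcf_ty k \<Gamma> M \<tau> \<and> interp M = p)"

coinductive reg_tm :: "nat \<Rightarrow> var \<Rightarrow> tm \<Rightarrow> bool" for k g where
  "(\<forall>\<sigma>\<in>set tys. lv \<sigma> \<le> k) \<Longrightarrow> reg_tm k g b \<Longrightarrow> reg_tm k g (Lam tys b)"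
| "reg_tm k g Bot"
| "reg_tm k g (Num n)"
| "(\<forall>x. v = FV x \<longrightarrow> x = g \<or> lv (snd x) \<le> k) \<Longrightarrow> (\<forall>q\<in>set qs. reg_tm k g q) \<Longrightarrow>
     (\<forall>i. reg_tm k g (bs i)) \<Longrightarrow> reg_tm k g (VCase v qs bs)"
| "reg_tm k g p \<Longrightarrow> (\<forall>q\<in>set qs. reg_tm k g q) \<Longrightarrow>
     (\<forall>i. reg_tm k g (bs i)) \<Longrightarrow> reg_tm k g (ACase p qs bs)"
| "reg_tm k g s \<Longrightarrow> (\<forall>i. reg_tm k g (bs i)) \<Longrightarrow> reg_tm k g (MCase s bs)"

definition g_regular :: "nat \<Rightarrow> var \<Rightarrow> var set \<Rightarrow> tm \<Rightarrow> bool" where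
  "g_regular k g \<Gamma> t \<longleftrightarrow> g \<in> \<Gamma> \<and> (\<forall>v\<in>\<Gamma>. v \<noteq> g \<longrightarrow> lv (snd v) \<le> k) \<and> reg_tm k g t"

type_synonym judg = "var set \<times> tm"

definition rule_ok :: "nat \<Rightarrow> judg \<Rightarrow> judg list \<Rightarrow> bool" where
  "rule_ok k c cs \<longleftrightarrow>
    \<comment> \<open>rule 1\<close>
    (\<exists>\<Gamma> x qs. c = (\<Gamma>, Lam [] (VCase (FV x) qs Num)) \<and> x \<in> \<Gamma> \<and>
        length qs = length (args (snd x)) \<and> (\<forall>i<length qs. ptype (qs ! i) = args (snd x) ! i) \<and>
        cs = map (\<lambda>q. (\<Gamma>, q)) qs)
    \<comment> \<open>rule 2\<close>
  \<or> (\<exists>\<Gamma> x p. x \<notin> \<Gamma> \<and> c = (\<Gamma>, close x p) \<and> cs = [(insert x \<Gamma>, p)])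
    \<comment> \<open>rule 3\<close>
  \<or> (\<exists>\<Gamma> n. c = (\<Gamma>, Lam [] (Num n)) \<and> cs = [])
    \<comment> \<open>rule 4\<close>
  \<or> (\<exists>\<Gamma> p f. c = (\<Gamma>, replace_leaves p (\<lambda>i. case f i of None \<Rightarrow> Bot | Some n \<Rightarrow> Num n)) \<and>
        cs = [(\<Gamma>, p)])
    \<comment> \<open>rule 5\<close>
  \<or> (\<exists>\<Gamma> p d e. c = (\<Gamma>, replace_leaves p (\<lambda>i. if i = 0 then d else e)) \<and>
        cs = [(\<Gamma>, p), (\<Gamma>, Lam [] d), (\<Gamma>, Lam [] e)])
    \<comment> \<open>rule 6\<close>
  \<or> (\<exists>\<Gamma> \<sigma>s e qs. lv (foldr Arr \<sigma>s N) \<le> k \<and> length qs = length \<sigma>s \<and>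
        (\<forall>i<length qs. ptype (qs ! i) = \<sigma>s ! i) \<and>
        c = (\<Gamma>, Lam [] (eval (Plug \<sigma>s e qs))) \<and>
        cs = (\<Gamma>, Lam (foldr Arr \<sigma>s N # \<sigma>s) e) # map (\<lambda>q. (\<Gamma>, q)) qs)"

datatype dtree = DNode judg "dtree list"

fun dconcl :: "dtree \<Rightarrow> judg" where
  "dconcl (DNode c ts) = c"

fun valid_deriv :: "nat \<Rightarrow> dtree \<Rightarrow> bool" where
  "valid_deriv k (DNode c ts) \<longleftrightarrow> rule_ok k c (map dconcl ts) \<and> (\<forall>t\<in>set ts. valid_deriv k t)"

fun dnodes :: "dtree \<Rightarrow> judg list" where
  "dnodes (DNode c ts) = c # concat (map dnodes ts)"

end

theory Submission
  imports Defs
begin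

definition okv :: "nat \<Rightarrow> var \<Rightarrow> nat list \<Rightarrow> vr \<Rightarrow> bool" where
  "okv k g Ls v = (case v of BV i j \<Rightarrow> i < length Ls \<and> j < Ls ! i | FV x \<Rightarrow> x = g \<or> lv (snd x) \<le> k)"

coinductive good :: "nat \<Rightarrow> var \<Rightarrow> nat list \<Rightarrow> tm \<Rightarrow> bool" for k g where
  gLam: "(\<forall>\<sigma>\<in>set tys. lv \<sigma> \<le> k) \<Longrightarrow> good k g (length tys # Ls) b \<Longrightarrow> good k g Ls (Lam tys b)"
| gBot: "good k g Ls Bot"
| gNum: "good k g Ls (Num n)"
| gV: "okv k g Ls v \<Longrightarrow> (\<forall>q\<in>set qs. good k g Ls q) \<Longrightarrow> (\<forall>i. good k g Ls (bs i)) \<Longrightarrow> good k g Ls (VCase v qs bs)"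
| gA: "good k g Ls p \<Longrightarrow> (\<forall>q\<in>set qs. good k g Ls q) \<Longrightarrow> (\<forall>i. good k g Ls (bs i)) \<Longrightarrow> good k g Ls (ACase p qs bs)"
| gM: "good k g Ls s \<Longrightarrow> (\<forall>i. good k g Ls (bs i)) \<Longrightarrow> good k g Ls (MCase s bs)"

lemma good_simps:
  "good k g Ls (Lam tys b) \<longleftrightarrow> (\<forall>\<sigma>\<in>set tys. lv \<sigma> \<le> k) \<and> good k g (length tys # Ls) b"
  "good k g Ls Bot"
  "good k g Ls (Num n)"
  "good k g Ls (VCase v qs bs) \<longleftrightarrow> okv k g Ls v \<and> (\<forall>q\<in>set qs. good k g Ls q) \<and> (\<forall>i. good k g Ls (bs i))"
  "good k g Ls (ACase p qs bs) \<longleftrightarrow> good k g Ls p \<and> (\<forall>q\<in>set qs. good k g Ls q) \<and> (\<forall>i. good k g Ls (bs i))"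
  "good k g Ls (MCase s bs) \<longleftrightarrow> good k g Ls s \<and> (\<forall>i. good k g Ls (bs i))"
  by (auto elim: good.cases intro: good.intros)

definition gstep :: "nat \<Rightarrow> var \<Rightarrow> (nat list \<Rightarrow> tm \<Rightarrow> bool) \<Rightarrow> nat list \<Rightarrow> tm \<Rightarrow> bool" where
  "gstep k g X Ls t = (case t of
      Lam tys b \<Rightarrow> (\<forall>\<sigma>\<in>set tys. lv \<sigma> \<le> k) \<and> (X (length tys # Ls) b \<or> good k g (length tys # Ls) b)
    | Bot \<Rightarrow> True | Num n \<Rightarrow> True
    | VCase v qs bs \<Rightarrow> okv k g Ls v \<and> (\<forall>q\<in>set qs. X Ls q \<or> good k g Ls q) \<and> (\<forall>i. X Ls (bs i) \<or> good k g Ls (bs i))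
    | ACase p qs bs \<Rightarrow> (X Ls p \<or> good k g Ls p) \<and> (\<forall>q\<in>set qs. X Ls q \<or> good k g Ls q) \<and> (\<forall>i. X Ls (bs i) \<or> good k g Ls (bs i))
    | MCase s bs \<Rightarrow> (X Ls s \<or> good k g Ls s) \<and> (\<forall>i. X Ls (bs i) \<or> good k g Ls (bs i)))"

lemma good_coind:
  assumes "X Ls t" and step: "\<And>Ls t. X Ls t \<Longrightarrow> gstep k g X Ls t"
  shows "good k g Ls t"
  using assms(1)
proof (coinduction arbitrary: Ls t rule: good.coinduct)
  case (good Ls t)
  from step[OF good] show ?case
    by (cases t) (auto simp: gstep_def)
qed

lemma good_vmap:
  assumes cond: "\<And>A v. okv k g (A @ Bin) v \<Longrightarrow>
      (case \<rho> (length A) v of Inl v' \<Rightarrow> okv k g (A @ Bout) v' | Inr q \<Rightarrow> good k g (A @ Bout) q)"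
    and "good k g (A @ Bin) t"
  shows "good k g (A @ Bout) (vmap \<rho> (length A) t)"
proof -
  define X where "X = (\<lambda>Ls u. \<exists>A t. Ls = A @ Bout \<and> u = vmap \<rho> (length A) t \<and> good k g (A @ Bin) t)"
  have "X (A @ Bout) (vmap \<rho> (length A) t)" using assms(2) unfolding X_def by blast
  then show ?thesis
  proof (rule good_coind)
    fix Ls u assume "X Ls u"
    then obtain A t where Ls: "Ls = A @ Bout" and u: "u = vmap \<rho> (length A) t" and gt: "good k g (A @ Bin) t"
      unfolding X_def by blast
    show "gstep k g X Ls u"
    proof (cases t)
      case (Lam tys b)
      have "X ((length tys # A) @ Bout) (vmap \<rho> (length (length tys # A)) b)"
        using gt Lam unfolding X_def by (auto simp: good_simps intro!: exI[of _ "length tys # A"])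
      then show ?thesis using gt Lam u Ls by (simp add: vmap.code gstep_def good_simps)
    next
      case (VCase v qs bs)
      have ok: "okv k g (A @ Bin) v" using gt VCase by (simp add: good_simps)
      have xs: "\<forall>q\<in>set qs. X Ls (vmap \<rho> (length A) q)" "\<forall>i. X Ls (vmap \<rho> (length A) (bs i))"
        using gt VCase Ls unfolding X_def by (auto simp: good_simps)
      show ?thesis
      proof (cases "\<rho> (length A) v")
        case (Inl v')
        then show ?thesis using cond[OF ok] xs u VCase Ls by (auto simp: vmap.code gstep_def)
      next
        case (Inr q)
        then show ?thesis using cond[OF ok] xs u VCase Ls by (auto simp: vmap.code gstep_def)
      qed
    next
      case (ACase p qs bs)
      then show ?thesis using gt u Ls unfolding X_def
        by (auto simp: vmap.code gstep_def good_simps)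
    next
      case (MCase s bs)
      then show ?thesis using gt u Ls unfolding X_def
        by (auto simp: vmap.code gstep_def good_simps)
    qed (auto simp: u vmap.code gstep_def)
  qed
qed

lemma good_mono:
  assumes "good k g Ls t" and ok: "\<And>A v. okv k g (A @ Ls) v \<Longrightarrow> okv k g (A @ Ls') v"
  shows "good k g Ls' t"
proof -
  define X where "X = (\<lambda>L u. \<exists>A. L = A @ Ls' \<and> good k g (A @ Ls) u)"
  have "X Ls' t" using assms(1) unfolding X_def by (auto intro: exI[of _ "[]"])
  then show ?thesis
  proof (rule good_coind)
    fix L u assume "X L u"
    then obtain A where L: "L = A @ Ls'" and gu: "good k g (A @ Ls) u" unfolding X_def by blast
    show "gstep k g X L u"
    proof (cases u)
      case (Lam tys b)
      then show ?thesis using gu L unfolding X_def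
        by (auto simp: gstep_def good_simps intro!: exI[of _ "length tys # A"])
    next
      case (VCase v qs bs)
      then show ?thesis using gu L ok[of A v] unfolding X_def by (auto simp: gstep_def good_simps)
    next
      case (ACase p qs bs)
      then show ?thesis using gu L unfolding X_def by (auto simp: gstep_def good_simps)
    next
      case (MCase s bs)
      then show ?thesis using gu L unfolding X_def by (auto simp: gstep_def good_simps)
    qed (auto simp: gstep_def)
  qed
qed

lemma nth_append_zeros:
  fixes B :: "nat list"
  assumes "\<forall>n\<in>set B. n = 0" "i < length (A @ B)" "j < (A @ B) ! i"
  shows "i < length A"
proof (rule ccontr)
  assume "\<not> i < length A"
  then have "(A @ B) ! i = B ! (i - length A)" "i - length A < length B" using assms(2)
    by (auto simp: nth_append)
  then have "B ! (i - length A) = 0" using assms(1) by (metis nth_mem)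
  then show False using assms(3) \<open>(A @ B) ! i = B ! (i - length A)\<close> by simp
qed

lemma good_closed:
  assumes "\<forall>n\<in>set B. n = 0" "good k g B t"
  shows "good k g L t"
  using assms(2)
proof (rule good_mono)
  fix A v assume "okv k g (A @ B) v"
  then show "okv k g (A @ L) v"
    using nth_append_zeros[OF assms(1)]
    by (auto simp: okv_def nth_append split: vr.splits)
qed

lemma good_shift:
  assumes "good k g L q"
  shows "good k g (A @ L) (shift (length A) q)"
proof -
  have "good k g ([] @ (A @ L)) (vmap (\<lambda>d v. Inl (shiftv d (length A) v)) (length ([]::nat list)) q)"
  proof (rule good_vmap)
    show "good k g ([] @ L) q" using assms by simp
  next
    fix A' v assume "okv k g (A' @ L) v"
    then show "case Inl (shiftv (length A') (length A) v) of Inl v' \<Rightarrow> okv k g (A' @ A @ L) v'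
         | Inr q \<Rightarrow> good k g (A' @ A @ L) q"
      by (cases v) (auto simp: okv_def nth_append)
  qed
  then show ?thesis by (simp add: shift_def)
qed

lemma good_inst:
  assumes "good k g (length qs # Ls) b" "\<forall>q\<in>set qs. good k g Ls q"
  shows "good k g Ls (inst b qs)"
proof -
  let ?\<rho> = "(\<lambda>d v. case v of
       BV i j \<Rightarrow> (if i = d then Inr (shift d (qs ! j))
                  else if d < i then Inl (BV (i - 1) j) else Inl (BV i j))
     | FV x \<Rightarrow> Inl (FV x))"
  have "good k g ([] @ Ls) (vmap ?\<rho> (length ([]::nat list)) b)"
  proof (rule good_vmap[where Bin = "length qs # Ls"])
    show "good k g ([] @ length qs # Ls) b" using assms by simp
  next
    fix A v assume ok: "okv k g (A @ length qs # Ls) v"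
    show "case ?\<rho> (length A) v of Inl v' \<Rightarrow> okv k g (A @ Ls) v' | Inr q \<Rightarrow> good k g (A @ Ls) q"
    proof (cases v)
      case (BV i j)
      show ?thesis
      proof (cases "i = length A")
        case True
        then have "j < length qs" using ok BV by (auto simp: okv_def nth_append)
        then show ?thesis using True BV good_shift assms(2) by auto
      next
        case False
        then show ?thesis using ok BV
          by (cases i) (auto simp: okv_def nth_append nth_Cons' split: if_splits)
      qed
    qed (use ok in \<open>auto simp: okv_def\<close>)
  qed
  then show ?thesis by (simp add: inst_def)
qed

lemma good_hstep:
  assumes "good k g Ls t" "hstep t = Some t'"
  shows "good k g Ls t'"
proof (cases t)
  case (ACase p qs bs)
  then obtain tys b where p: "p = Lam tys b" and l: "length tys = length qs" and t': "t' = MCase (inst b qs) bs"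
    using assms(2) by (auto simp: hstep_def split: tm.splits if_splits)
  then show ?thesis using assms(1) ACase good_inst[of k g qs Ls b] by (auto simp: good_simps)
next
  case (MCase s bs)
  then show ?thesis using assms by (cases s) (auto simp: hstep_def good_simps)
qed (use assms in \<open>auto simp: hstep_def\<close>)

lemma good_hiter: "good k g Ls t \<Longrightarrow> good k g Ls (hiter n t)"
  by (induction n) (auto split: option.splits intro: good_hstep)

lemma good_hnorm: "good k g Ls t \<Longrightarrow> good k g Ls (hnorm t)"
  by (auto simp: hnorm_def good_hiter good_simps)

lemma good_pre_eval: "good k g Ls t \<Longrightarrow> good k g Ls (pre_eval t)"
  by (auto simp: pre_eval_def good_hnorm split: tm.splits)

lemma good_eval:
  assumes "good k g Ls t"
  shows "good k g Ls (eval t)"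
proof -
  define X where "X = (\<lambda>L u. \<exists>t. u = eval t \<and> good k g L t)"
  have "X Ls (eval t)" using assms unfolding X_def by blast
  then show ?thesis
  proof (rule good_coind)
    fix L u assume "X L u"
    then obtain t where u: "u = eval t" and gt: "good k g L (pre_eval t)"
      unfolding X_def using good_pre_eval by blast
    show "gstep k g X L u"
      using gt unfolding u X_def
      by (cases "pre_eval t") (auto simp: eval.code gstep_def good_simps)
  qed
qed

lemma good_close:
  assumes "good k g L (Lam tys e)" "lv (snd x) \<le> k"
  shows "good k g L (close x (Lam tys e))"
proof -
  let ?\<rho> = "(\<lambda>d v. case v of
          FV y \<Rightarrow> (if y = x then Inl (BV d 0) else Inl (FV y))
        | BV i j \<Rightarrow> (if i = d then Inl (BV d (Suc j)) else Inl (BV i j)))"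
  have "good k g ([] @ Suc (length tys) # L) (vmap ?\<rho> (length ([]::nat list)) e)"
  proof (rule good_vmap[where Bin = "length tys # L"])
    show "good k g ([] @ length tys # L) e" using assms by (simp add: good_simps)
  next
    fix A v assume ok: "okv k g (A @ length tys # L) v"
    show "case ?\<rho> (length A) v of Inl v' \<Rightarrow> okv k g (A @ Suc (length tys) # L) v'
        | Inr q \<Rightarrow> good k g (A @ Suc (length tys) # L) q"
      using ok by (cases v) (auto simp: okv_def nth_append)
  qed
  then show ?thesis using assms by (simp add: close_def good_simps)
qed

lemma good_rr_pre: "good k g L t \<Longrightarrow> (\<And>i L. good k g L (f i)) \<Longrightarrow> good k g L (rr_pre f b t)"
  by (auto simp: rr_pre_def split: tm.splits)

lemma good_rr:
  assumes "good k g L t" "\<And>i L. good k g L (f i)"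
  shows "good k g L (rr f b t)"
proof -
  define X where "X = (\<lambda>L u. \<exists>b t. u = rr f b t \<and> good k g L t)"
  have "X L (rr f b t)" using assms unfolding X_def by blast
  then show ?thesis
  proof (rule good_coind)
    fix L u assume "X L u"
    then obtain b t where u: "u = rr f b t" and gt: "good k g L t" unfolding X_def by blast
    have gp: "good k g L (rr_pre f b t)" using good_rr_pre[OF gt assms(2)] .
    show "gstep k g X L u"
      using gp unfolding u X_def
      by (cases "rr_pre f b t") (auto simp: rr.code gstep_def good_simps)
  qed
qed

lemma circ_simps:
  "circ d (Lam tys b) = Lam tys (circ (Suc d) b)"
  "circ d Bot = Bot" "circ d (Num n) = Num n"
  "circ d (VCase v qs bs) = (if v \<in> {BV d j | j. True} then Bot else VCase v (map (circ d) qs) (circ d \<circ> bs))"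
  "circ d (ACase p qs bs) = ACase (circ d p) (map (circ d) qs) (circ d \<circ> bs)"
  "circ d (MCase s bs) = MCase (circ d s) (circ d \<circ> bs)"
  by (subst circ.code; simp)+

lemma good_circ:
  assumes "good k g (A @ [a]) t"
  shows "good k g A (circ (length A) t)"
proof -
  define X where "X = (\<lambda>L u. \<exists>t. u = circ (length L) t \<and> good k g (L @ [a]) t)"
  have "X A (circ (length A) t)" using assms unfolding X_def by blast
  then show ?thesis
  proof (rule good_coind)
    fix L u assume "X L u"
    then obtain t where u: "u = circ (length L) t" and gt: "good k g (L @ [a]) t" unfolding X_def by blast
    show "gstep k g X L u"
    proof (cases t)
      case (Lam tys b)
      then show ?thesis using gt unfolding u X_def by (auto simp: circ_simps gstep_def good_simps)
    next
      case (VCase v qs bs)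
      show ?thesis
      proof (cases "v \<in> {BV (length L) j | j. True}")
        case True then show ?thesis using VCase u by (simp add: circ_simps gstep_def)
      next
        case False
        then have "okv k g L v" using gt VCase
          by (cases v) (auto simp: good_simps okv_def nth_append less_Suc_eq)
        then show ?thesis using False gt VCase unfolding u X_def by (auto simp: circ_simps gstep_def good_simps)
      qed
    next
      case (ACase p qs bs)
      then show ?thesis using gt unfolding u X_def by (auto simp: circ_simps gstep_def good_simps)
    next
      case (MCase s bs)
      then show ?thesis using gt unfolding u X_def by (auto simp: circ_simps gstep_def good_simps)
    qed (auto simp: u circ_simps gstep_def)
  qed
qed

lemma good_xi_z:
  assumes "good k g [Suc (length \<sigma>s)] e" "\<forall>\<sigma>\<in>set \<sigma>s. lv \<sigma> \<le> k"
  shows "good k g [Suc (length \<sigma>s)] (xi_z \<sigma>s e)"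
proof -
  let ?\<rho> = "(\<lambda>d v. case v of
       BV i j \<Rightarrow> (if i = d then (if j = 0 then Inl (BV (Suc d) 0) else Inl (BV d (j - 1)))
                  else if d < i then Inl (BV (Suc i) j) else Inl (BV i j))
     | FV x \<Rightarrow> Inl (FV x))"
  have "good k g ([] @ [length \<sigma>s, Suc (length \<sigma>s)]) (vmap ?\<rho> (length ([]::nat list)) e)"
  proof (rule good_vmap[where Bin = "[Suc (length \<sigma>s)]"])
    show "good k g ([] @ [Suc (length \<sigma>s)]) e" using assms by simp
  next
    fix A v assume ok: "okv k g (A @ [Suc (length \<sigma>s)]) v"
    show "case ?\<rho> (length A) v of Inl v' \<Rightarrow> okv k g (A @ [length \<sigma>s, Suc (length \<sigma>s)]) v'
        | Inr q \<Rightarrow> good k g (A @ [length \<sigma>s, Suc (length \<sigma>s)]) q"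
      using ok by (cases v) (auto simp: okv_def nth_append less_Suc_eq)
  qed
  then show ?thesis using assms by (simp add: xi_z_def good_simps)
qed

lemma good_plug_step:
  assumes "good k g [Suc (length \<sigma>s)] e" "\<forall>\<sigma>\<in>set \<sigma>s. lv \<sigma> \<le> k"
    and "length qs = length \<sigma>s" "\<forall>q\<in>set qs. good k g [] q"
    and "good k g [Suc (length \<sigma>s)] t"
  shows "good k g [Suc (length \<sigma>s)] (plug_step \<sigma>s e qs t)"
proof -
  let ?\<rho> = "(\<lambda>d v. case v of
       BV i j \<Rightarrow> (if i = d then (if j = 0 then Inr (shift d (xi_z \<sigma>s e)) else Inr (shift d (qs ! (j - 1))))
                  else Inl (BV i j))
     | FV x \<Rightarrow> Inl (FV x))"
  have xi: "good k g [Suc (length \<sigma>s)] (xi_z \<sigma>s e)" using good_xi_z assms(1,2) .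
  have "good k g ([] @ [Suc (length \<sigma>s)]) (vmap ?\<rho> (length ([]::nat list)) t)"
  proof (rule good_vmap[where Bin = "[Suc (length \<sigma>s)]"])
    show "good k g ([] @ [Suc (length \<sigma>s)]) t" using assms by simp
  next
    fix A v assume ok: "okv k g (A @ [Suc (length \<sigma>s)]) v"
    show "case ?\<rho> (length A) v of Inl v' \<Rightarrow> okv k g (A @ [Suc (length \<sigma>s)]) v'
        | Inr q \<Rightarrow> good k g (A @ [Suc (length \<sigma>s)]) q"
    proof (cases v)
      case (BV i j)
      show ?thesis
      proof (cases "i = length A")
        case True
        show ?thesis
        proof (cases j)
          case 0 then show ?thesis using True BV good_shift[OF xi] by auto
        next
          case (Suc j')
          then have "j' < length qs" using ok BV True assms(3) by (auto simp: okv_def nth_append)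
          then have "good k g [] (qs ! j')" using assms(4) by auto
          then have "good k g [Suc (length \<sigma>s)] (qs ! j')" by (rule good_closed[rotated]) auto
          then show ?thesis using True BV Suc good_shift by auto
        qed
      next
        case False then show ?thesis using ok BV by (auto simp: okv_def)
      qed
    qed (use ok in \<open>auto simp: okv_def\<close>)
  qed
  then show ?thesis by (simp add: plug_step_def)
qed

lemma good_plug_iter:
  assumes "good k g [Suc (length \<sigma>s)] e" "\<forall>\<sigma>\<in>set \<sigma>s. lv \<sigma> \<le> k"
    and "length qs = length \<sigma>s" "\<forall>q\<in>set qs. good k g [] q"
  shows "good k g [] (circ 0 ((plug_step \<sigma>s e qs ^^ m) e))"
proof -
  have "good k g [Suc (length \<sigma>s)] ((plug_step \<sigma>s e qs ^^ m) e)"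
    by (induction m) (use assms good_plug_step in auto)
  then show ?thesis using good_circ[of k g "[]" _] by simp
qed

coinductive le :: "tm \<Rightarrow> tm \<Rightarrow> bool" where
  leBot: "le Bot u"
| leLam: "le b b' \<Longrightarrow> le (Lam tys b) (Lam tys b')"
| leNum: "le (Num n) (Num n)"
| leV: "length qs = length qs' \<Longrightarrow> (\<forall>i<length qs. le (qs ! i) (qs' ! i)) \<Longrightarrow> (\<forall>i. le (bs i) (bs' i))
        \<Longrightarrow> le (VCase v qs bs) (VCase v qs' bs')"
| leA: "le p p' \<Longrightarrow> length qs = length qs' \<Longrightarrow> (\<forall>i<length qs. le (qs ! i) (qs' ! i)) \<Longrightarrow> (\<forall>i. le (bs i) (bs' i))
        \<Longrightarrow> le (ACase p qs bs) (ACase p' qs' bs')"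
| leM: "le s s' \<Longrightarrow> (\<forall>i. le (bs i) (bs' i)) \<Longrightarrow> le (MCase s bs) (MCase s' bs')"

definition lstep :: "(tm \<Rightarrow> tm \<Rightarrow> bool) \<Rightarrow> tm \<Rightarrow> tm \<Rightarrow> bool" where
  "lstep X a b = (case a of
      Bot \<Rightarrow> True
    | Lam tys x \<Rightarrow> (\<exists>x'. b = Lam tys x' \<and> (X x x' \<or> le x x'))
    | Num n \<Rightarrow> b = Num n
    | VCase v qs bs \<Rightarrow> (\<exists>qs' bs'. b = VCase v qs' bs' \<and> length qs = length qs' \<and>
          (\<forall>i<length qs. X (qs ! i) (qs' ! i) \<or> le (qs ! i) (qs' ! i)) \<and> (\<forall>i. X (bs i) (bs' i) \<or> le (bs i) (bs' i)))
    | ACase p qs bs \<Rightarrow> (\<exists>p' qs' bs'. b = ACase p' qs' bs' \<and> (X p p' \<or> le p p') \<and> length qs = length qs' \<and>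
          (\<forall>i<length qs. X (qs ! i) (qs' ! i) \<or> le (qs ! i) (qs' ! i)) \<and> (\<forall>i. X (bs i) (bs' i) \<or> le (bs i) (bs' i)))
    | MCase s bs \<Rightarrow> (\<exists>s' bs'. b = MCase s' bs' \<and> (X s s' \<or> le s s') \<and> (\<forall>i. X (bs i) (bs' i) \<or> le (bs i) (bs' i))))"

lemma le_coind:
  assumes "X a b" and step: "\<And>a b. X a b \<Longrightarrow> lstep X a b"
  shows "le a b"
  using assms(1)
proof (coinduction arbitrary: a b rule: le.coinduct)
  case (le a b)
  from step[OF le] show ?case
    by (cases a) (auto simp: lstep_def)
qed

lemma le_refl: "le t t"
proof -
  have "(\<lambda>a b. a = b) t t" by simp
  then show ?thesis
    by (rule le_coind) (auto simp: lstep_def split: tm.splits)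
qed

lemma le_inv:
  "le (Lam tys b) u \<Longrightarrow> \<exists>b'. u = Lam tys b' \<and> le b b'"
  "le (Num n) u \<Longrightarrow> u = Num n"
  "le (VCase v qs bs) u \<Longrightarrow> \<exists>qs' bs'. u = VCase v qs' bs' \<and> length qs = length qs' \<and> (\<forall>i<length qs. le (qs ! i) (qs' ! i)) \<and> (\<forall>i. le (bs i) (bs' i))"
  "le (ACase p qs bs) u \<Longrightarrow> \<exists>p' qs' bs'. u = ACase p' qs' bs' \<and> le p p' \<and> length qs = length qs' \<and> (\<forall>i<length qs. le (qs ! i) (qs' ! i)) \<and> (\<forall>i. le (bs i) (bs' i))"
  "le (MCase s bs) u \<Longrightarrow> \<exists>s' bs'. u = MCase s' bs' \<and> le s s' \<and> (\<forall>i. le (bs i) (bs' i))"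
  by (auto elim: le.cases)

lemma le_trans:
  assumes "le a b" "le b c" shows "le a c"
proof -
  have "(\<lambda>a c. \<exists>b. le a b \<and> le b c) a c" using assms by blast
  then show ?thesis
  proof (rule le_coind)
    fix a c assume "\<exists>b. le a b \<and> le b c"
    then obtain b where ab: "le a b" and bc: "le b c" by blast
    show "lstep (\<lambda>a c. \<exists>b. le a b \<and> le b c) a c"
    proof (cases a)
      case (Lam tys x)
      then show ?thesis using ab bc by (auto simp: lstep_def dest!: le_inv(1))
    next
      case (Num n) then show ?thesis using ab bc by (auto simp: lstep_def dest!: le_inv(2))
    next
      case (VCase v qs bs)
      then show ?thesis using ab bc by (fastforce simp: lstep_def dest!: le_inv(3))
    next
      case (ACase p qs bs)
      then show ?thesis using ab bc by (fastforce simp: lstep_def dest!: le_inv(4))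
    next
      case (MCase s bs)
      then show ?thesis using ab bc by (fastforce simp: lstep_def dest!: le_inv(5))
    qed (auto simp: lstep_def)
  qed
qed

definition chain :: "(nat \<Rightarrow> tm) \<Rightarrow> bool" where
  "chain c = (\<forall>m n. m \<le> n \<longrightarrow> le (c m) (c n))"

lemma chainI: assumes "\<And>m. le (c m) (c (Suc m))" shows "chain c"
  unfolding chain_def
proof (intro allI impI)
  fix m n :: nat assume "m \<le> n"
  then show "le (c m) (c n)"
    by (induction n rule: dec_induct) (auto intro: le_refl le_trans assms)
qed

lemma le_sel:
  "le (Lam tys b) u \<Longrightarrow> u = Lam tys (lbody u) \<and> le b (lbody u)"
  "le (VCase v qs bs) u \<Longrightarrow> u = VCase v (vargs u) (vbr u) \<and> length (vargs u) = length qs \<and> (\<forall>i<length qs. le (qs ! i) (vargs u ! i)) \<and> (\<forall>i. le (bs i) (vbr u i))"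
  "le (ACase p qs bs) u \<Longrightarrow> u = ACase (afun u) (aargs u) (abr u) \<and> le p (afun u) \<and> length (aargs u) = length qs \<and> (\<forall>i<length qs. le (qs ! i) (aargs u ! i)) \<and> (\<forall>i. le (bs i) (abr u i))"
  "le (MCase s bs) u \<Longrightarrow> u = MCase (msubj u) (mbr u) \<and> le s (msubj u) \<and> (\<forall>i. le (bs i) (mbr u i))"
  by (auto elim: le.cases)

lemma good_lub:
  assumes "chain c" "\<forall>m. good k g L (c m)"
  shows "good k g L (lub c)"
proof -
  define X where "X = (\<lambda>L u. \<exists>c. u = lub c \<and> chain c \<and> (\<forall>m. good k g L (c m)))"
  have "X L (lub c)" using assms unfolding X_def by blast
  then show ?thesis
  proof (rule good_coind)
    fix L u assume "X L u"
    then obtain c where u: "u = lub c" and ch: "chain c" and gc: "\<forall>m. good k g L (c m)"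
      unfolding X_def by blast
    show "gstep k g X L u"
    proof (cases "\<exists>m. c m \<noteq> Bot")
      case False
      then have "lubhd c = Bot" by (simp add: lubhd_def)
      then show ?thesis unfolding u by (subst lub.code) (simp add: gstep_def)
    next
      case True
      define s where "s = lubstart c"
      define d where "d = (\<lambda>m. c (s + m))"
      have cs: "c s \<noteq> Bot" unfolding s_def lubstart_def using True by (rule LeastI_ex)
      have hd: "lubhd c = c s" using True by (simp add: lubhd_def s_def)
      have tl: "ltail c = d" by (simp add: ltail_def s_def d_def fun_eq_iff)
      have le0: "\<And>m. le (c s) (d m)" using ch by (simp add: chain_def d_def)
      have lemn: "\<And>m n. m \<le> n \<Longrightarrow> le (d m) (d n)" using ch by (simp add: chain_def d_def)
      have gd: "\<And>m. good k g L (d m)" using gc by (simp add: d_def)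
      have gs: "good k g L (c s)" using gc by simp
      show ?thesis
      proof (cases "c s")
        case (Lam tys b)
        have sh: "\<And>m. d m = Lam tys (lbody (d m))"
          using le0 Lam le_sel(1) by metis
        have "chain (\<lambda>m. lbody (d m))"
          unfolding chain_def
        proof (intro allI impI)
          fix m n :: nat assume mn: "m \<le> n"
          have "le (Lam tys (lbody (d m))) (d n)" using lemn[OF mn] sh[of m] by simp
          from le_sel(1)[OF this] show "le (lbody (d m)) (lbody (d n))" by simp
        qed
        moreover have "\<forall>m. good k g (length tys # L) (lbody (d m))"
        proof
          fix m
          have "good k g L (Lam tys (lbody (d m)))" using gd[of m] sh[of m] by simp
          then show "good k g (length tys # L) (lbody (d m))" by (simp add: good_simps)
        qed
        ultimately have "X (length tys # L) (lub (\<lambda>m. lbody (ltail c m)))"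
          unfolding X_def tl by blast
        then show ?thesis using gs Lam hd unfolding u
          by (subst lub.code) (simp add: gstep_def good_simps)
      next
        case Bot then show ?thesis using cs by simp
      next
        case (Num n)
        then show ?thesis unfolding u using hd by (subst lub.code) (simp add: gstep_def)
      next
        case (VCase v qs bs)
        have sh: "\<And>m. d m = VCase v (vargs (d m)) (vbr (d m)) \<and> length (vargs (d m)) = length qs"
          using le0 VCase le_sel(2) by metis
        have gm: "\<And>m. good k g L (VCase v (vargs (d m)) (vbr (d m)))" using gd sh by metis
        have lm: "\<And>m n. m \<le> n \<Longrightarrow> le (VCase v (vargs (d m)) (vbr (d m))) (d n)" using lemn sh by metis
        have ch1: "\<And>j. j < length qs \<Longrightarrow> chain (\<lambda>m. vargs (d m) ! j)"
          unfolding chain_def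
        proof (intro allI impI)
          fix j m n :: nat assume j: "j < length qs" and mn: "m \<le> n"
          from le_sel(2)[OF lm[OF mn]] j sh[of m] show "le (vargs (d m) ! j) (vargs (d n) ! j)" by simp
        qed
        have ch2: "\<And>i. chain (\<lambda>m. vbr (d m) i)"
          unfolding chain_def
        proof (intro allI impI)
          fix i m n :: nat assume mn: "m \<le> n"
          from le_sel(2)[OF lm[OF mn]] show "le (vbr (d m) i) (vbr (d n) i)" by simp
        qed
        have g1: "\<And>j m. j < length qs \<Longrightarrow> good k g L (vargs (d m) ! j)"
        proof -
          fix j m assume j: "j < length qs"
          have "\<forall>q\<in>set (vargs (d m)). good k g L q" using gm[of m] unfolding good_simps by blast
          moreover have "j < length (vargs (d m))" using j conjunct2[OF sh[of m]] by simp
          ultimately show "good k g L (vargs (d m) ! j)" by auto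
        qed
        have g2: "\<And>i m. good k g L (vbr (d m) i)"
          using gm by (simp add: good_simps)
        have ok: "okv k g L v" using gs VCase by (simp add: good_simps)
        have "\<forall>q\<in>set (map (\<lambda>j. lub (\<lambda>m. vargs (ltail c m) ! j)) [0..<length qs]). X L q"
          using ch1 g1 unfolding X_def tl by auto
        moreover have "\<forall>i. X L (lub (\<lambda>m. vbr (ltail c m) i))"
          using ch2 g2 unfolding X_def tl by auto
        ultimately show ?thesis using ok hd VCase unfolding u
          by (subst lub.code) (simp add: gstep_def)
      next
        case (ACase p qs bs)
        have sh: "\<And>m. d m = ACase (afun (d m)) (aargs (d m)) (abr (d m)) \<and> length (aargs (d m)) = length qs"
          using le0 ACase le_sel(3) by metis
        have gm: "\<And>m. good k g L (ACase (afun (d m)) (aargs (d m)) (abr (d m)))" using gd sh by metis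
        have lm: "\<And>m n. m \<le> n \<Longrightarrow> le (ACase (afun (d m)) (aargs (d m)) (abr (d m))) (d n)" using lemn sh by metis
        have ch0: "chain (\<lambda>m. afun (d m))"
          unfolding chain_def
        proof (intro allI impI)
          fix m n :: nat assume mn: "m \<le> n"
          from le_sel(3)[OF lm[OF mn]] show "le (afun (d m)) (afun (d n))" by simp
        qed
        have ch1: "\<And>j. j < length qs \<Longrightarrow> chain (\<lambda>m. aargs (d m) ! j)"
          unfolding chain_def
        proof (intro allI impI)
          fix j m n :: nat assume j: "j < length qs" and mn: "m \<le> n"
          from le_sel(3)[OF lm[OF mn]] j sh[of m] show "le (aargs (d m) ! j) (aargs (d n) ! j)" by simp
        qed
        have ch2: "\<And>i. chain (\<lambda>m. abr (d m) i)"
          unfolding chain_def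
        proof (intro allI impI)
          fix i m n :: nat assume mn: "m \<le> n"
          from le_sel(3)[OF lm[OF mn]] show "le (abr (d m) i) (abr (d n) i)" by simp
        qed
        have g0: "\<And>m. good k g L (afun (d m))" using gm by (simp add: good_simps)
        have g1: "\<And>j m. j < length qs \<Longrightarrow> good k g L (aargs (d m) ! j)"
        proof -
          fix j m assume j: "j < length qs"
          have "\<forall>q\<in>set (aargs (d m)). good k g L q" using gm[of m] unfolding good_simps by blast
          moreover have "j < length (aargs (d m))" using j conjunct2[OF sh[of m]] by simp
          ultimately show "good k g L (aargs (d m) ! j)" by auto
        qed
        have g2: "\<And>i m. good k g L (abr (d m) i)"
          using gm by (simp add: good_simps)
        have "X L (lub (\<lambda>m. afun (ltail c m)))" using ch0 g0 unfolding X_def tl by auto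
        moreover have "\<forall>q\<in>set (map (\<lambda>j. lub (\<lambda>m. aargs (ltail c m) ! j)) [0..<length qs]). X L q"
          using ch1 g1 unfolding X_def tl by auto
        moreover have "\<forall>i. X L (lub (\<lambda>m. abr (ltail c m) i))"
          using ch2 g2 unfolding X_def tl by auto
        ultimately show ?thesis using hd ACase unfolding u
          by (subst lub.code) (simp add: gstep_def)
      next
        case (MCase s0 bs)
        have sh: "\<And>m. d m = MCase (msubj (d m)) (mbr (d m))"
          using le0 MCase le_sel(4) by metis
        have gm: "\<And>m. good k g L (MCase (msubj (d m)) (mbr (d m)))" using gd sh by metis
        have lm: "\<And>m n. m \<le> n \<Longrightarrow> le (MCase (msubj (d m)) (mbr (d m))) (d n)" using lemn sh by metis
        have ch0: "chain (\<lambda>m. msubj (d m))"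
          unfolding chain_def
        proof (intro allI impI)
          fix m n :: nat assume mn: "m \<le> n"
          from le_sel(4)[OF lm[OF mn]] show "le (msubj (d m)) (msubj (d n))" by simp
        qed
        have ch2: "\<And>i. chain (\<lambda>m. mbr (d m) i)"
          unfolding chain_def
        proof (intro allI impI)
          fix i m n :: nat assume mn: "m \<le> n"
          from le_sel(4)[OF lm[OF mn]] show "le (mbr (d m) i) (mbr (d n) i)" by simp
        qed
        have g0: "\<And>m. good k g L (msubj (d m))" using gm by (simp add: good_simps)
        have g2: "\<And>i m. good k g L (mbr (d m) i)" using gm by (simp add: good_simps)
        have "X L (lub (\<lambda>m. msubj (ltail c m)))" using ch0 g0 unfolding X_def tl by auto
        moreover have "\<forall>i. X L (lub (\<lambda>m. mbr (ltail c m) i))"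
          using ch2 g2 unfolding X_def tl by auto
        ultimately show ?thesis using hd MCase unfolding u
          by (subst lub.code) (simp add: gstep_def)
      qed
    qed
  qed
qed

lemma vmap_simps:
  "vmap \<rho> d (Lam tys b) = Lam tys (vmap \<rho> (Suc d) b)"
  "vmap \<rho> d (ACase p qs bs) = ACase (vmap \<rho> d p) (map (vmap \<rho> d) qs) (vmap \<rho> d \<circ> bs)"
  "vmap \<rho> d (MCase s bs) = MCase (vmap \<rho> d s) (vmap \<rho> d \<circ> bs)"
  "\<rho> d v = Inl v' \<Longrightarrow> vmap \<rho> d (VCase v qs bs) = VCase v' (map (vmap \<rho> d) qs) (vmap \<rho> d \<circ> bs)"
  "vmap \<rho> d Bot = Bot" "vmap \<rho> d (Num n) = Num n"
  by (subst vmap.code; simp)+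

lemma le_circ_vmap:
  assumes cond: "\<And>d v. (\<forall>j. v \<noteq> BV d j) \<Longrightarrow> \<rho> d v = Inl v"
  shows "le (circ d t) (circ d (vmap \<rho> d t))"
proof -
  define X where "X = (\<lambda>a b. \<exists>d t. a = circ d t \<and> b = circ d (vmap \<rho> d t))"
  have "X (circ d t) (circ d (vmap \<rho> d t))" unfolding X_def by blast
  then show ?thesis
  proof (rule le_coind)
    fix a b assume "X a b"
    then obtain d t where a: "a = circ d t" and b: "b = circ d (vmap \<rho> d t)" unfolding X_def by blast
    show "lstep X a b"
    proof (cases t)
      case (Lam tys x)
      then show ?thesis unfolding a b X_def by (auto simp: circ_simps vmap_simps lstep_def)
    next
      case (VCase v qs bs)
      show ?thesis
      proof (cases "v \<in> {BV d j | j. True}")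
        case True then show ?thesis unfolding a VCase by (simp add: circ_simps lstep_def)
      next
        case False
        then have "\<rho> d v = Inl v" using cond by blast
        then show ?thesis using False unfolding a b VCase X_def
          by (auto simp: circ_simps vmap_simps lstep_def)
      qed
    next
      case (ACase p qs bs)
      then show ?thesis unfolding a b X_def by (auto simp: circ_simps vmap_simps lstep_def)
    next
      case (MCase s bs)
      then show ?thesis unfolding a b X_def by (auto simp: circ_simps vmap_simps lstep_def)
    qed (auto simp: a b circ_simps vmap_simps lstep_def)
  qed
qed

lemma good_Plug:
  assumes "good k g [Suc (length \<sigma>s)] e" "\<forall>\<sigma>\<in>set \<sigma>s. lv \<sigma> \<le> k"
    and "length qs = length \<sigma>s" "\<forall>q\<in>set qs. good k g [] q"
  shows "good k g [] (Plug \<sigma>s e qs)"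
proof -
  have "chain (\<lambda>m. circ 0 ((plug_step \<sigma>s e qs ^^ m) e))"
  proof (rule chainI)
    fix m
    show "le (circ 0 ((plug_step \<sigma>s e qs ^^ m) e)) (circ 0 ((plug_step \<sigma>s e qs ^^ Suc m) e))"
      unfolding funpow.simps comp_def plug_step_def
      by (rule le_circ_vmap) (auto split: vr.splits)
  qed
  then show ?thesis unfolding Plug_def
    by (rule good_lub) (use good_plug_iter assms in blast)
qed

definition envreg :: "nat \<Rightarrow> var \<Rightarrow> var set \<Rightarrow> bool" where
  "envreg k g \<Delta> = (g \<in> \<Delta> \<and> (\<forall>v\<in>\<Delta>. v \<noteq> g \<longrightarrow> lv (snd v) \<le> k))"

definition toplow :: "nat \<Rightarrow> tm \<Rightarrow> bool" where
  "toplow k p = (case p of Lam tys _ \<Rightarrow> (\<forall>\<sigma>\<in>set tys. lv \<sigma> \<le> k) | _ \<Rightarrow> True)"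

lemma lv_foldr: "\<sigma> \<in> set tys \<Longrightarrow> lv \<sigma> < lv (foldr Arr tys N)"
  by (induction tys) auto

lemma lv_args: "i < length (args \<tau>) \<Longrightarrow> lv (args \<tau> ! i) < lv \<tau>"
proof (induction \<tau> arbitrary: i)
  case (Arr s t)
  then show ?case by (cases i) fastforce+
qed simp

lemma toplow_ptype: "lv (ptype q) \<le> Suc k \<Longrightarrow> toplow k q"
  by (auto simp: toplow_def ptype_def split: tm.splits dest!: lv_foldr)

lemma rr_Lam: "rr f b (Lam tys e) = Lam tys (rr f b e)"
  by (subst rr.code) (simp add: rr_pre_def rr_mode_def)

lemma close_Lam: "\<exists>e'. close x (Lam tys e) = Lam (snd x # tys) e'"
  by (simp add: close_def)

lemma deriv_Lam: "valid_deriv k T \<Longrightarrow> is_Lam (snd (dconcl T))"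
proof (induction T)
  case (DNode c ts)
  have ok: "rule_ok k c (map dconcl ts)" and vt: "\<forall>t\<in>set ts. valid_deriv k t" using DNode.prems by auto
  have IH: "\<And>t. t \<in> set ts \<Longrightarrow> is_Lam (snd (dconcl t))" using DNode.IH vt by blast
  from ok show ?case unfolding rule_ok_def
  proof (elim disjE exE conjE)
    fix \<Gamma> x p assume "c = (\<Gamma>, close x p)" "map dconcl ts = [(insert x \<Gamma>, p)]"
    then obtain t1 where "ts = [t1]" "dconcl t1 = (insert x \<Gamma>, p)" by (cases ts) auto
    then have "is_Lam p" using IH by force
    then show ?thesis using \<open>c = _\<close> by (auto simp: close_def is_Lam_def)
  next
    fix \<Gamma> p f assume "c = (\<Gamma>, replace_leaves p (\<lambda>i. case f i of None \<Rightarrow> Bot | Some n \<Rightarrow> Num n))" "map dconcl ts = [(\<Gamma>, p)]"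
    then obtain t1 where "ts = [t1]" "dconcl t1 = (\<Gamma>, p)" by (cases ts) auto
    then have "is_Lam p" using IH by force
    then show ?thesis using \<open>c = _\<close> by (auto simp: replace_leaves_def is_Lam_def rr_Lam)
  next
    fix \<Gamma> p d e assume "c = (\<Gamma>, replace_leaves p (\<lambda>i. if i = 0 then d else e))"
      "map dconcl ts = [(\<Gamma>, p), (\<Gamma>, Lam [] d), (\<Gamma>, Lam [] e)]"
    then obtain t1 ts' where "ts = t1 # ts'" "dconcl t1 = (\<Gamma>, p)" by (cases ts) auto
    then have "is_Lam p" using IH by force
    then show ?thesis using \<open>c = _\<close> by (auto simp: replace_leaves_def is_Lam_def rr_Lam)
  qed auto
qed

lemma good_reg: "good k g Ls t \<Longrightarrow> reg_tm k g t"
proof (coinduction arbitrary: Ls t rule: reg_tm.coinduct)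
  case (reg_tm Ls t)
  show ?case
  proof (cases t)
    case (Lam tys b) then show ?thesis using reg_tm by (simp add: good_simps) blast
  next
    case (VCase v qs bs)
    have "\<forall>x. v = FV x \<longrightarrow> x = g \<or> lv (snd x) \<le> k" using reg_tm VCase by (cases v) (auto simp: good_simps okv_def)
    then show ?thesis using reg_tm VCase by (simp add: good_simps) blast
  next
    case (ACase p qs bs) then show ?thesis using reg_tm by (simp add: good_simps) blast
  next
    case (MCase s bs) then show ?thesis using reg_tm by (simp add: good_simps) blast
  qed simp_all
qed

lemma dconcl_in: "dconcl t \<in> set (dnodes t)"
  by (cases t) auto

lemma map_dconcl_set:
  assumes "map dconcl ts = map (\<lambda>q. (\<Gamma>, q)) qs"
  shows "\<And>t. t \<in> set ts \<Longrightarrow> \<exists>i<length qs. dconcl t = (\<Gamma>, qs ! i)"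
    and "\<And>q. q \<in> set qs \<Longrightarrow> \<exists>t\<in>set ts. dconcl t = (\<Gamma>, q)"
proof -
  have len: "length ts = length qs" using arg_cong[OF assms, of length] by simp
  have nth: "\<And>i. i < length qs \<Longrightarrow> dconcl (ts ! i) = (\<Gamma>, qs ! i)"
  proof -
    fix i assume i: "i < length qs"
    have "map dconcl ts ! i = map (\<lambda>q. (\<Gamma>, q)) qs ! i" using assms by simp
    then show "dconcl (ts ! i) = (\<Gamma>, qs ! i)" using i len by simp
  qed
  show "\<And>t. t \<in> set ts \<Longrightarrow> \<exists>i<length qs. dconcl t = (\<Gamma>, qs ! i)"
    using nth len by (metis in_set_conv_nth)
  show "\<And>q. q \<in> set qs \<Longrightarrow> \<exists>t\<in>set ts. dconcl t = (\<Gamma>, q)"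
    using nth len by (metis in_set_conv_nth nth_mem)
qed

lemma good0_any: "good k g [0] d \<Longrightarrow> good k g L d"
  by (rule good_closed[of "[0]"]) auto

lemma main:
  assumes "valid_deriv k T" "dconcl T = (\<Delta>, p)" "envreg k g \<Delta>" "toplow k p" "lv (snd g) = k + 2"
  shows "\<forall>n\<in>set (dnodes T). envreg k g (fst n) \<and> good k g [] (snd n)"
  using assms
proof (induction T arbitrary: \<Delta> p)
  case (DNode c ts)
  have ok: "rule_ok k c (map dconcl ts)" and vt: "\<forall>t\<in>set ts. valid_deriv k t" using DNode.prems by auto
  have c: "c = (\<Delta>, p)" using DNode.prems by simp
  have env: "envreg k g \<Delta>" and tl: "toplow k p" and gl: "lv (snd g) = k + 2" using DNode.prems by auto
  have IH: "\<And>t. t \<in> set ts \<Longrightarrow> envreg k g (fst (dconcl t)) \<Longrightarrow> toplow k (snd (dconcl t)) \<Longrightarrow>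
      \<forall>n\<in>set (dnodes t). envreg k g (fst n) \<and> good k g [] (snd n)"
    using DNode.IH vt gl by (metis prod.collapse)
  have key: "(\<forall>t\<in>set ts. envreg k g (fst (dconcl t)) \<and> toplow k (snd (dconcl t))) \<and>
      ((\<forall>t\<in>set ts. good k g [] (snd (dconcl t))) \<longrightarrow> good k g [] p)"
    using ok unfolding rule_ok_def
  proof (elim disjE exE conjE)
    fix \<Gamma> x qs
    assume c1: "c = (\<Gamma>, Lam [] (VCase (FV x) qs Num))" and x: "x \<in> \<Gamma>"
      and len: "length qs = length (args (snd x))" and pt: "\<forall>i<length qs. ptype (qs ! i) = args (snd x) ! i"
      and cs: "map dconcl ts = map (\<lambda>q. (\<Gamma>, q)) qs"
    have \<Gamma>: "\<Gamma> = \<Delta>" "p = Lam [] (VCase (FV x) qs Num)" using c c1 by auto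
    have xl: "lv (snd x) \<le> k + 2" "x = g \<or> lv (snd x) \<le> k" using env x gl \<Gamma> by (auto simp: envreg_def)
    have A: "\<forall>t\<in>set ts. envreg k g (fst (dconcl t)) \<and> toplow k (snd (dconcl t))"
    proof
      fix t assume "t \<in> set ts"
      then obtain i where i: "i < length qs" "dconcl t = (\<Gamma>, qs ! i)" using map_dconcl_set(1)[OF cs] by blast
      have "lv (ptype (qs ! i)) < lv (snd x)" using pt i len lv_args by auto
      then have "toplow k (qs ! i)" using xl by (intro toplow_ptype) auto
      then show "envreg k g (fst (dconcl t)) \<and> toplow k (snd (dconcl t))" using i env \<Gamma> by simp
    qed
    moreover have "(\<forall>t\<in>set ts. good k g [] (snd (dconcl t))) \<longrightarrow> good k g [] p"
    proof
      assume G: "\<forall>t\<in>set ts. good k g [] (snd (dconcl t))"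
      have "\<forall>q\<in>set qs. good k g [0] q"
      proof
        fix q assume "q \<in> set qs"
        then obtain t where "t \<in> set ts" "dconcl t = (\<Gamma>, q)" using map_dconcl_set(2)[OF cs] by blast
        then have "good k g [] q" using G by force
        then show "good k g [0] q" by (rule good_closed[of "[]", rotated]) auto
      qed
      then show "good k g [] p" using \<Gamma> xl by (simp add: good_simps okv_def)
    qed
    ultimately show ?thesis by blast
  next
    fix \<Gamma> x p0 assume x: "x \<notin> \<Gamma>" and c2: "c = (\<Gamma>, close x p0)" and cs: "map dconcl ts = [(insert x \<Gamma>, p0)]"
    then obtain t1 where ts: "ts = [t1]" and d1: "dconcl t1 = (insert x \<Gamma>, p0)" by (cases ts) auto
    have "is_Lam p0" using deriv_Lam[of k t1] vt ts d1 by simp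
    then obtain tys e where p0: "p0 = Lam tys e" by (cases p0) auto
    have pe: "p = Lam (snd x # tys) (lbody (close x p0))" "\<Gamma> = \<Delta>"
      using c c2 close_Lam[of x tys e] p0 by auto
    have lx: "lv (snd x) \<le> k" and ltys: "\<forall>\<sigma>\<in>set tys. lv \<sigma> \<le> k" using tl pe by (auto simp: toplow_def)
    have "g \<in> \<Gamma>" using env pe by (simp add: envreg_def)
    then have "envreg k g (insert x \<Gamma>)" using env pe lx by (auto simp: envreg_def)
    then have A: "\<forall>t\<in>set ts. envreg k g (fst (dconcl t)) \<and> toplow k (snd (dconcl t))"
      using ts d1 p0 ltys by (simp add: toplow_def)
    moreover have "(\<forall>t\<in>set ts. good k g [] (snd (dconcl t))) \<longrightarrow> good k g [] p"
      using ts d1 p0 good_close[of k g "[]" tys e x] lx c c2 by auto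
    ultimately show ?thesis by blast
  next
    fix \<Gamma> n assume "c = (\<Gamma>, Lam [] (Num n))" "map dconcl ts = []"
    then show ?thesis using c by (auto simp: good_simps)
  next
    fix \<Gamma> p0 f assume c4: "c = (\<Gamma>, replace_leaves p0 (\<lambda>i. case f i of None \<Rightarrow> Bot | Some n \<Rightarrow> Num n))"
      and cs: "map dconcl ts = [(\<Gamma>, p0)]"
    then obtain t1 where ts: "ts = [t1]" and d1: "dconcl t1 = (\<Gamma>, p0)" by (cases ts) auto
    have "is_Lam p0" using deriv_Lam[of k t1] vt ts d1 by simp
    then obtain tys e where p0: "p0 = Lam tys e" by (cases p0) auto
    have pe: "p = Lam tys (rr (\<lambda>i. case f i of None \<Rightarrow> Bot | Some n \<Rightarrow> Num n) True e)" "\<Gamma> = \<Delta>"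
      using c c4 p0 by (auto simp: replace_leaves_def rr_Lam)
    have "\<forall>t\<in>set ts. envreg k g (fst (dconcl t)) \<and> toplow k (snd (dconcl t))"
      using ts d1 p0 pe tl env by (simp add: toplow_def)
    moreover have "(\<forall>t\<in>set ts. good k g [] (snd (dconcl t))) \<longrightarrow> good k g [] p"
    proof
      assume "\<forall>t\<in>set ts. good k g [] (snd (dconcl t))"
      then have "good k g [] p0" using ts d1 by simp
      moreover have "\<And>i L. good k g L (case f i of None \<Rightarrow> Bot | Some n \<Rightarrow> Num n)"
        by (auto simp: good_simps split: option.splits)
      ultimately have "good k g [] (rr (\<lambda>i. case f i of None \<Rightarrow> Bot | Some n \<Rightarrow> Num n) True p0)" by (rule good_rr)
      then show "good k g [] p" using c c4 by (simp add: replace_leaves_def)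
    qed
    ultimately show ?thesis by blast
  next
    fix \<Gamma> p0 d e assume c5: "c = (\<Gamma>, replace_leaves p0 (\<lambda>i. if i = 0 then d else e))"
      and cs: "map dconcl ts = [(\<Gamma>, p0), (\<Gamma>, Lam [] d), (\<Gamma>, Lam [] e)]"
    then obtain t1 t2 t3 where ts: "ts = [t1, t2, t3]" and d1: "dconcl t1 = (\<Gamma>, p0)"
      and d2: "dconcl t2 = (\<Gamma>, Lam [] d)" and d3: "dconcl t3 = (\<Gamma>, Lam [] e)"
      by (cases ts; cases "tl ts"; cases "tl (tl ts)") auto
    have "is_Lam p0" using deriv_Lam[of k t1] vt ts d1 by simp
    then obtain tys e0 where p0: "p0 = Lam tys e0" by (cases p0) auto
    have pe: "p = Lam tys (rr (\<lambda>i. if i = 0 then d else e) True e0)" "\<Gamma> = \<Delta>"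
      using c c5 p0 by (auto simp: replace_leaves_def rr_Lam)
    have "\<forall>t\<in>set ts. envreg k g (fst (dconcl t)) \<and> toplow k (snd (dconcl t))"
      using ts d1 d2 d3 p0 pe tl env by (simp add: toplow_def)
    moreover have "(\<forall>t\<in>set ts. good k g [] (snd (dconcl t))) \<longrightarrow> good k g [] p"
    proof
      assume "\<forall>t\<in>set ts. good k g [] (snd (dconcl t))"
      then have "good k g [] p0" "good k g [] (Lam [] d)" "good k g [] (Lam [] e)" using ts d1 d2 d3 by auto
      then have "good k g [] p0" "\<And>L. good k g L d" "\<And>L. good k g L e"
        by (auto simp: good_simps intro: good0_any)
      then have "\<And>i L. good k g L (if i = 0 then d else e)" by auto
      with \<open>good k g [] p0\<close> have "good k g [] (rr (\<lambda>i. if i = 0 then d else e) True p0)" by (rule good_rr)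
      then show "good k g [] p" using c c5 by (simp add: replace_leaves_def)
    qed
    ultimately show ?thesis by blast
  next
    fix \<Gamma> \<sigma>s e qs assume lvz: "lv (foldr Arr \<sigma>s N) \<le> k" and len: "length qs = length \<sigma>s"
      and pt: "\<forall>i<length qs. ptype (qs ! i) = \<sigma>s ! i"
      and c6: "c = (\<Gamma>, Lam [] (eval (Plug \<sigma>s e qs)))"
      and cs: "map dconcl ts = (\<Gamma>, Lam (foldr Arr \<sigma>s N # \<sigma>s) e) # map (\<lambda>q. (\<Gamma>, q)) qs"
    then obtain t0 ts' where ts: "ts = t0 # ts'" and d0: "dconcl t0 = (\<Gamma>, Lam (foldr Arr \<sigma>s N # \<sigma>s) e)"
      and cs': "map dconcl ts' = map (\<lambda>q. (\<Gamma>, q)) qs" by (cases ts) auto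
    have pe: "p = Lam [] (eval (Plug \<sigma>s e qs))" "\<Gamma> = \<Delta>" using c c6 by auto
    have ls: "\<forall>\<sigma>\<in>set \<sigma>s. lv \<sigma> \<le> k" using lvz lv_foldr by fastforce
    have A: "\<forall>t\<in>set ts. envreg k g (fst (dconcl t)) \<and> toplow k (snd (dconcl t))"
    proof
      fix t assume "t \<in> set ts"
      then consider "t = t0" | "t \<in> set ts'" using ts by auto
      then show "envreg k g (fst (dconcl t)) \<and> toplow k (snd (dconcl t))"
      proof cases
        case 1 then show ?thesis using d0 env pe lvz ls by (simp add: toplow_def)
      next
        case 2
        then obtain i where i: "i < length qs" "dconcl t = (\<Gamma>, qs ! i)" using map_dconcl_set(1)[OF cs'] by blast
        have "lv (ptype (qs ! i)) \<le> k" using pt i len ls by (simp add: nth_mem)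
        then have "toplow k (qs ! i)" by (intro toplow_ptype) auto
        then show ?thesis using i env pe by simp
      qed
    qed
    moreover have "(\<forall>t\<in>set ts. good k g [] (snd (dconcl t))) \<longrightarrow> good k g [] p"
    proof
      assume G: "\<forall>t\<in>set ts. good k g [] (snd (dconcl t))"
      then have "good k g [] (Lam (foldr Arr \<sigma>s N # \<sigma>s) e)" using ts d0 by force
      then have ge: "good k g [Suc (length \<sigma>s)] e" by (simp add: good_simps)
      have gq: "\<forall>q\<in>set qs. good k g [] q"
      proof
        fix q assume "q \<in> set qs"
        then obtain t where "t \<in> set ts'" "dconcl t = (\<Gamma>, q)" using map_dconcl_set(2)[OF cs'] by blast
        then show "good k g [] q" using G ts by force
      qed
      have "good k g [] (Plug \<sigma>s e qs)" using good_Plug[OF ge ls len gq] .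
      then have "good k g [0] (Plug \<sigma>s e qs)" by (rule good_closed[of "[]", rotated]) auto
      then show "good k g [] p" using pe good_eval by (simp add: good_simps)
    qed
    ultimately show ?thesis by blast
  qed
  have A: "\<And>t. t \<in> set ts \<Longrightarrow> \<forall>n\<in>set (dnodes t). envreg k g (fst n) \<and> good k g [] (snd n)"
    using IH key by blast
  then have "\<forall>t\<in>set ts. good k g [] (snd (dconcl t))" using dconcl_in by blast
  then have "good k g [] p" using key by blast
  then show ?case using A env c by auto
qed

theorem proposition3p11:
  fixes k :: nat and g :: var and \<Gamma> :: "var set" and t :: tm and T :: dtree
  assumes "1 \<le> k"
    and "lv (snd g) = k + 2"
    and "finite \<Gamma>"
    and "g_regular k g \<Gamma> t"
    and "denotable k \<Gamma> t"
    and "valid_deriv k T"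
    and "dconcl T = (\<Gamma>, t)"
  shows "\<forall>(\<Delta>, p) \<in> set (dnodes T). g_regular k g \<Delta> p"
proof -
  have env: "envreg k g \<Gamma>" using assms(4) by (simp add: g_regular_def envreg_def)
  have "reg_tm k g t" using assms(4) by (simp add: g_regular_def)
  then have tl: "toplow k t" by (cases t) (auto simp: toplow_def elim: reg_tm.cases)
  have "\<forall>n\<in>set (dnodes T). envreg k g (fst n) \<and> good k g [] (snd n)"
    using main[OF assms(6) assms(7) env tl assms(2)] .
  then show ?thesis
  proof (intro ballI)
    fix n assume H: "\<forall>n\<in>set (dnodes T). envreg k g (fst n) \<and> good k g [] (snd n)" and n: "n \<in> set (dnodes T)"
    obtain \<Delta> p where np: "n = (\<Delta>, p)" by (cases n)
    have "envreg k g \<Delta>" "good k g [] p" using H n np by auto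
    then have "g_regular k g \<Delta> p" unfolding g_regular_def envreg_def using good_reg by blast
    then show "case n of (\<Delta>, p) \<Rightarrow> g_regular k g \<Delta> p" using np by simp
  qed
qed

end
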